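(* Let $p$ be a prime and let $H$ be a finite non-abelian group whose order is not divisible by $p$. Let $W\cong H\wr C$ where $C$ is cyclic of order $p$ (the regular wreath product, with base group $H^p$ permuted cyclically by $C$), and let $x\in W$ have order $p$. Then there exists $w\in W$ such that $x^w x$ is not a $p$-element. *)

theory Defs
  imports "HOL-Algebra.Algebra"
begin

text \<open>Elements are pairs (f, a) with f : {0..<p} \<rightarrow> carrier H
  (extensional) and a \<in> {0..<p} (the cyclic group Z/pZ written additively);
  C_p permutes the p coordinates of the base group cyclically:
  (f, a) * (g, b) = (\<lambda>i. f i * g ((i + a) mod p), (a + b) mod p).\<close>

definition wreath_cyc :: "('a, 'b) monoid_scheme \<Rightarrow> nat \<Rightarrow> ((nat \<Rightarrow> 'a) \<times> nat) monoid" where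
  "wreath_cyc H p =
     \<lparr> carrier = {(f, a). f \<in> {0..<p} \<rightarrow>\<^sub>E carrier H \<and> a < p},
       monoid.mult = (\<lambda>(f, a) (g, b).
                 (\<lambda>i\<in>{0..<p}. f i \<otimes>\<^bsub>H\<^esub> g ((i + a) mod p), (a + b) mod p)),
       one = (\<lambda>i\<in>{0..<p}. \<one>\<^bsub>H\<^esub>, 0) \<rparr>"

definition conj_elt :: "('a, 'b) monoid_scheme \<Rightarrow> 'a \<Rightarrow> 'a \<Rightarrow> 'a" where
  "conj_elt G x w = inv\<^bsub>G\<^esub> w \<otimes>\<^bsub>G\<^esub> x \<otimes>\<^bsub>G\<^esub> w"

definition p_element :: "('a, 'b) monoid_scheme \<Rightarrow> nat \<Rightarrow> 'a \<Rightarrow> bool" where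
  "p_element G p x \<longleftrightarrow> (\<exists>k. group.ord G x = p ^ k)"

end

theory Submission imports Defs
begin

fun lprod :: "('a,'b) monoid_scheme \<Rightarrow> (nat \<Rightarrow> 'a) \<Rightarrow> nat \<Rightarrow> 'a" where
  "lprod M s 0 = \<one>\<^bsub>M\<^esub>"
| "lprod M s (Suc n) = lprod M s n \<otimes>\<^bsub>M\<^esub> s n"

lemma (in group) lprod_closed: "(\<And>k. k < n \<Longrightarrow> s k \<in> carrier G) \<Longrightarrow> lprod G s n \<in> carrier G"
  by (induction n) auto

lemma (in group) lprod_const: "c \<in> carrier G \<Longrightarrow> lprod G (\<lambda>k. c) n = c [^] n"
  by (induction n) auto

lemma (in group) lprod_skip:
  assumes "m \<le> n" "\<And>k. m \<le> k \<Longrightarrow> k < n \<Longrightarrow> s k = \<one>" "\<And>k. k < n \<Longrightarrow> s k \<in> carrier G"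
  shows "lprod G s n = lprod G s m"
  using assms
proof (induction n)
  case 0 then show ?case by simp
next
  case (Suc n)
  show ?case
  proof (cases "m = Suc n")
    case True then show ?thesis by simp
  next
    case False
    then have "m \<le> n" using Suc.prems by simp
    then have "lprod G s n = lprod G s m" using Suc by auto
    moreover have "s n = \<one>" using Suc.prems \<open>m \<le> n\<close> by auto
    moreover have "lprod G s n \<in> carrier G" using Suc.prems by (intro lprod_closed) auto
    ultimately show ?thesis by simp
  qed
qed

lemma (in group) cancel_l: "x \<in> carrier G \<Longrightarrow> z \<in> carrier G \<Longrightarrow> inv x \<otimes> (x \<otimes> z) = z"
  by (simp add: m_assoc[symmetric])
lemma (in group) cancel_r: "x \<in> carrier G \<Longrightarrow> z \<in> carrier G \<Longrightarrow> x \<otimes> (inv x \<otimes> z) = z"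
  by (simp add: m_assoc[symmetric])

lemma (in group) comm_lemma:
  assumes u: "u \<in> carrier G" and v: "v \<in> carrier G"
    and e: "u \<otimes> inv v \<otimes> (inv u \<otimes> v) = \<one>"
  shows "u \<otimes> v = v \<otimes> u"
proof -
  have "inv (inv u \<otimes> v) = u \<otimes> inv v" using e u v by (intro inv_equality) auto
  then have 1: "inv v \<otimes> u = u \<otimes> inv v" using u v by (simp add: inv_mult_group)
  have "u \<otimes> v = v \<otimes> (inv v \<otimes> u) \<otimes> v"
    using u v by (simp add: m_assoc cancel_r)
  also have "\<dots> = v \<otimes> (u \<otimes> inv v) \<otimes> v" using 1 by simp
  also have "\<dots> = v \<otimes> u" using u v by (simp add: m_assoc)
  finally show ?thesis by simp
qed

lemma iso_ord:
  assumes "group G" "group K" "\<phi> \<in> hom G K" "inj_on \<phi> (carrier G)" "y \<in> carrier G"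
  shows "group.ord K (\<phi> y) = group.ord G y"
proof -
  interpret G: group G by fact
  interpret K: group K by fact
  interpret gh: group_hom G K \<phi> using assms by (simp add: group_hom_def group_hom_axioms_def)
  have "\<phi> y [^]\<^bsub>K\<^esub> n = \<one>\<^bsub>K\<^esub> \<longleftrightarrow> y [^]\<^bsub>G\<^esub> n = \<one>\<^bsub>G\<^esub>" for n :: nat
  proof -
    have "\<phi> y [^]\<^bsub>K\<^esub> n = \<phi> (y [^]\<^bsub>G\<^esub> n)" using assms by (simp add: gh.hom_nat_pow)
    moreover have "\<phi> (y [^]\<^bsub>G\<^esub> n) = \<phi> \<one>\<^bsub>G\<^esub> \<longleftrightarrow> y [^]\<^bsub>G\<^esub> n = \<one>\<^bsub>G\<^esub>"
      using assms(4,5) by (metis G.nat_pow_closed G.one_closed inj_onD)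
    ultimately show ?thesis by simp
  qed
  then show ?thesis using assms
    by (simp add: K.ord_unique G.pow_eq_id)
qed

lemma (in group) conj_ord:
  assumes "c \<in> carrier G" "y \<in> carrier G"
  shows "ord (c \<otimes> y \<otimes> inv c) = ord y"
proof -
  have "(\<lambda>z. c \<otimes> z \<otimes> inv c) \<in> hom G G"
    using assms by (auto simp: hom_def m_assoc cancel_l)
  moreover have "inj_on (\<lambda>z. c \<otimes> z \<otimes> inv c) (carrier G)"
    using assms by (auto simp: inj_on_def)
  ultimately show ?thesis using iso_ord[of G G] assms group_axioms by blast
qed

locale wr = H: group H for H :: "('a,'b) monoid_scheme" and p :: nat +
  assumes p_gt: "1 < p"
begin

abbreviation WG where "WG \<equiv> wreath_cyc H p"

lemma carrier_WG: "(f, a) \<in> carrier WG \<longleftrightarrow> f \<in> {0..<p} \<rightarrow>\<^sub>E carrier H \<and> a < p"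
  by (simp add: wreath_cyc_def)

lemma mult_WG: "(f, a) \<otimes>\<^bsub>WG\<^esub> (g, b) = (\<lambda>i\<in>{0..<p}. f i \<otimes>\<^bsub>H\<^esub> g ((i + a) mod p), (a + b) mod p)"
  by (simp add: wreath_cyc_def)

lemma one_WG: "\<one>\<^bsub>WG\<^esub> = (\<lambda>i\<in>{0..<p}. \<one>\<^bsub>H\<^esub>, 0)"
  by (simp add: wreath_cyc_def)

lemma PiE_app: "f \<in> {0..<p} \<rightarrow>\<^sub>E carrier H \<Longrightarrow> f (j mod p) \<in> carrier H"
  using p_gt by auto

lemma PiE_app2: "f \<in> {0..<p} \<rightarrow>\<^sub>E carrier H \<Longrightarrow> j < p \<Longrightarrow> f j \<in> carrier H"
  by auto

lemma monoid_WG: "monoid WG"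
proof
  fix x y assume "x \<in> carrier WG" "y \<in> carrier WG"
  then show "x \<otimes>\<^bsub>WG\<^esub> y \<in> carrier WG"
    by (cases x; cases y) (auto simp: carrier_WG mult_WG PiE_app)
next
  fix x y z assume "x \<in> carrier WG" "y \<in> carrier WG" "z \<in> carrier WG"
  then show "x \<otimes>\<^bsub>WG\<^esub> y \<otimes>\<^bsub>WG\<^esub> z = x \<otimes>\<^bsub>WG\<^esub> (y \<otimes>\<^bsub>WG\<^esub> z)"
    apply (cases x; cases y; cases z)
    apply (simp add: carrier_WG mult_WG)
    apply (intro conjI restrict_ext)
     subgoal by (simp add: PiE_app PiE_app2 H.m_assoc mod_add_right_eq mod_add_left_eq add.assoc)
    subgoal by (simp only: mod_add_left_eq mod_add_right_eq add.assoc)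
    done
next
  show "\<one>\<^bsub>WG\<^esub> \<in> carrier WG" using p_gt by (auto simp: one_WG carrier_WG)
next
  fix x assume "x \<in> carrier WG"
  then show "\<one>\<^bsub>WG\<^esub> \<otimes>\<^bsub>WG\<^esub> x = x"
  proof (cases x)
    case (Pair f a)
    then have f: "f \<in> {0..<p} \<rightarrow>\<^sub>E carrier H" "a < p" using \<open>x \<in> carrier WG\<close> by (auto simp: carrier_WG)
    have "(\<lambda>i\<in>{0..<p}. (\<lambda>i\<in>{0..<p}. \<one>\<^bsub>H\<^esub>) i \<otimes>\<^bsub>H\<^esub> f ((i + 0) mod p)) = restrict f {0..<p}"
      by (intro restrict_ext) (simp add: PiE_app2 f)
    also have "\<dots> = f" using f(1) by (simp add: PiE_restrict)
    finally show ?thesis using Pair f by (simp add: mult_WG one_WG)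
  qed
next
  fix x assume "x \<in> carrier WG"
  then show "x \<otimes>\<^bsub>WG\<^esub> \<one>\<^bsub>WG\<^esub> = x"
  proof (cases x)
    case (Pair f a)
    then have f: "f \<in> {0..<p} \<rightarrow>\<^sub>E carrier H" "a < p" using \<open>x \<in> carrier WG\<close> by (auto simp: carrier_WG)
    have "(\<lambda>i\<in>{0..<p}. f i \<otimes>\<^bsub>H\<^esub> (\<lambda>i\<in>{0..<p}. \<one>\<^bsub>H\<^esub>) ((i + a) mod p)) = restrict f {0..<p}"
      using p_gt by (intro restrict_ext) (simp add: PiE_app2 f)
    also have "\<dots> = f" using f(1) by (simp add: PiE_restrict)
    finally show ?thesis using Pair f by (simp add: mult_WG one_WG)
  qed
qed

definition invf where "invf f a = (\<lambda>i\<in>{0..<p}. inv\<^bsub>H\<^esub> f ((i + (p - a)) mod p))"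

lemma invf_carrier: "(f, a) \<in> carrier WG \<Longrightarrow> (invf f a, (p - a) mod p) \<in> carrier WG"
  by (auto simp: carrier_WG invf_def PiE_app)

lemma invf_l: "(f, a) \<in> carrier WG \<Longrightarrow> (invf f a, (p - a) mod p) \<otimes>\<^bsub>WG\<^esub> (f, a) = \<one>\<^bsub>WG\<^esub>"
  apply (simp add: carrier_WG mult_WG one_WG invf_def)
  apply (intro conjI restrict_ext)
   apply (simp add: mod_add_right_eq PiE_app)
  apply (simp add: mod_add_left_eq)
  done

lemma group_WG: "group WG"
proof (rule monoid.group_l_invI[OF monoid_WG])
  fix x assume "x \<in> carrier WG"
  then show "\<exists>y\<in>carrier WG. y \<otimes>\<^bsub>WG\<^esub> x = \<one>\<^bsub>WG\<^esub>"
    by (cases x) (metis invf_carrier invf_l)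
qed

sublocale W: group WG by (rule group_WG)

lemma inv_WG: "(f, a) \<in> carrier WG \<Longrightarrow> inv\<^bsub>WG\<^esub> (f, a) = (invf f a, (p - a) mod p)"
  by (intro W.inv_equality invf_l invf_carrier) auto

lemma inv_WG0: "(h, 0) \<in> carrier WG \<Longrightarrow> inv\<^bsub>WG\<^esub> (h, 0) = (\<lambda>i\<in>{0..<p}. inv\<^bsub>H\<^esub> h i, 0)"
  by (simp add: inv_WG invf_def) (intro restrict_ext, simp)

lemma pow_WG: "(f, a) \<in> carrier WG \<Longrightarrow>
   (f, a) [^]\<^bsub>WG\<^esub> (n::nat) = (\<lambda>i\<in>{0..<p}. lprod H (\<lambda>k. f ((i + k * a) mod p)) n, (n * a) mod p)"
proof (induction n)
  case 0 then show ?case by (simp add: one_WG restrict_def)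
next
  case (Suc n)
  then show ?case
    apply (simp add: mult_WG)
    apply (intro conjI)
     apply (auto simp: restrict_def fun_eq_iff mod_add_right_eq add.assoc)[1]
    apply (simp add: mod_add_left_eq mod_add_right_eq add.commute)
    done
qed

end

locale wr2 = wr +
  assumes prime: "Factorial_Ring.prime p" and fin: "finite (carrier H)"
    and ndvd: "\<not> p dvd order H"
begin

lemma base_trivial:
  assumes "(g, 0) \<in> carrier WG" "(g, 0) [^]\<^bsub>WG\<^esub> (p ^ m) = \<one>\<^bsub>WG\<^esub>" "i < p"
  shows "g i = \<one>\<^bsub>H\<^esub>"
proof -
  have gi: "g i \<in> carrier H" using assms by (auto simp: carrier_WG)
  have "lprod H (\<lambda>k. g ((i + k * 0) mod p)) (p ^ m) = \<one>\<^bsub>H\<^esub>"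
    using assms(2) pow_WG[OF assms(1), of "p ^ m"] assms(3) one_WG
    by (metis (no_types, lifting) atLeastLessThan_iff fst_conv le0 restrict_apply')
  then have "g i [^]\<^bsub>H\<^esub> (p ^ m) = \<one>\<^bsub>H\<^esub>"
    using assms(3) gi by (simp add: H.lprod_const)
  then have "H.ord (g i) dvd p ^ m" using gi H.pow_eq_id by blast
  moreover have "H.ord (g i) dvd order H" using gi H.ord_dvd_group_order by blast
  moreover have "coprime (p ^ m) (order H)"
    using prime ndvd by (simp add: prime_imp_coprime)
  ultimately have "H.ord (g i) = 1"
    by (meson coprime_common_divisor_nat)
  then show ?thesis using gi H.ord_eq_1 by blast
qed

lemma pow_p_base: "(f, a) \<in> carrier WG \<Longrightarrow> \<exists>g. (f, a) [^]\<^bsub>WG\<^esub> p = (g, 0)"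
  by (simp add: pow_WG)

lemma not_p_element:
  assumes y: "y \<in> carrier WG" and yp: "y [^]\<^bsub>WG\<^esub> p = (g, 0)" and i: "i < p" and gi: "g i \<noteq> \<one>\<^bsub>H\<^esub>"
  shows "\<not> p_element WG p y"
proof
  assume "p_element WG p y"
  then obtain m where m: "W.ord y = p ^ m" by (auto simp: p_element_def)
  have "(y [^]\<^bsub>WG\<^esub> p) [^]\<^bsub>WG\<^esub> (p ^ m) = (y [^]\<^bsub>WG\<^esub> (p ^ m)) [^]\<^bsub>WG\<^esub> p"
    using y by (simp add: W.nat_pow_pow mult.commute)
  also have "\<dots> = \<one>\<^bsub>WG\<^esub>" using y m by (metis W.nat_pow_one W.pow_ord_eq_1)
  finally have "(g, 0) [^]\<^bsub>WG\<^esub> (p ^ m) = \<one>\<^bsub>WG\<^esub>" using yp by simp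
  moreover have "(g, 0) \<in> carrier WG" using yp y by (metis W.nat_pow_closed)
  ultimately have "g i = \<one>\<^bsub>H\<^esub>" using base_trivial i by blast
  with gi show False by simp
qed

lemma not_p_element0:
  assumes y: "y = (g, 0)" "y \<in> carrier WG" and i: "i < p" and gi: "g i \<noteq> \<one>\<^bsub>H\<^esub>"
  shows "\<not> p_element WG p y"
proof
  assume "p_element WG p y"
  then obtain m where m: "W.ord y = p ^ m" by (auto simp: p_element_def)
  have "(g, 0) [^]\<^bsub>WG\<^esub> (p ^ m) = \<one>\<^bsub>WG\<^esub>" using y m by (metis W.pow_ord_eq_1)
  then have "g i = \<one>\<^bsub>H\<^esub>" using base_trivial i y by blast
  with gi show False by simp
qed


end

context wr2 begin
definition x0 where "x0 a = ((\<lambda>i\<in>{0..<p}. \<one>\<^bsub>H\<^esub>), a)"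

lemma normal_form:
  assumes x: "(f, a) \<in> carrier WG" and o: "W.ord (f, a) = p"
  shows "0 < a \<and> (\<exists>c\<in>carrier WG. (f, a) = c \<otimes>\<^bsub>WG\<^esub> x0 a \<otimes>\<^bsub>WG\<^esub> inv\<^bsub>WG\<^esub> c)"
proof -
  have xp: "(f, a) [^]\<^bsub>WG\<^esub> p = \<one>\<^bsub>WG\<^esub>" using x o by (metis W.pow_ord_eq_1)
  have f: "f \<in> {0..<p} \<rightarrow>\<^sub>E carrier H" "a < p" using x by (auto simp: carrier_WG)
  have a0: "a \<noteq> 0"
  proof
    assume az: "a = 0"
    then have "(f, 0) [^]\<^bsub>WG\<^esub> (p ^ 1) = \<one>\<^bsub>WG\<^esub>" using xp by simp
    then have fi: "\<forall>i<p. f i = \<one>\<^bsub>H\<^esub>" using base_trivial x az by blast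
    have "f = (\<lambda>i\<in>{0..<p}. \<one>\<^bsub>H\<^esub>)"
    proof
      fix i show "f i = (\<lambda>i\<in>{0..<p}. \<one>\<^bsub>H\<^esub>) i"
      proof (cases "i < p")
        case True then show ?thesis using fi by simp
      next
        case False then show ?thesis using PiE_arb[OF f(1), of i] by simp
      qed
    qed
    then have "(f, a) = \<one>\<^bsub>WG\<^esub>" using az by (simp add: one_WG)
    then show False using o p_gt by simp
  qed
  obtain a' where a': "(a * a') mod p = 1"
  proof -
    have "\<not> p dvd a" using f(2) a0 by (auto dest: dvd_imp_le)
    then have "coprime p a" using prime by (intro prime_imp_coprime)
    then have "gcd a p = 1" by (simp add: coprime_iff_gcd_eq_1 gcd.commute)
    then obtain x y where "a * x = p * y + 1" using bezout_nat[of a p] a0 by auto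
    then have "(a * x) mod p = 1" using p_gt by (metis mod_mult_self2 mod_less add.commute)
    then show ?thesis using that by blast
  qed
  define Q where "Q k = lprod H (\<lambda>j. f ((0 + j * a) mod p)) k" for k
  have Qc: "Q k \<in> carrier H" for k unfolding Q_def
    by (rule H.lprod_closed) (use f in \<open>auto simp: PiE_app\<close>)
  have Qp: "Q p = \<one>\<^bsub>H\<^esub>"
  proof -
    have "fst ((f, a) [^]\<^bsub>WG\<^esub> p) 0 = fst (\<one>\<^bsub>WG\<^esub>) 0" using xp by simp
    then show ?thesis using p_gt by (simp add: pow_WG[OF x] one_WG Q_def)
  qed
  define h0 where "h0 = (\<lambda>i\<in>{0..<p}. inv\<^bsub>H\<^esub> (Q ((i * a') mod p)))"
  have h0c: "h0 \<in> {0..<p} \<rightarrow>\<^sub>E carrier H" by (auto simp: h0_def Qc)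
  have key: "h0 i = f i \<otimes>\<^bsub>H\<^esub> h0 ((i + a) mod p)" if i: "i < p" for i
  proof -
    define k where "k = (i * a') mod p"
    have kp: "k < p" using p_gt by (simp add: k_def)
    have "(k * a) mod p = ((i * a') * a) mod p" unfolding k_def by (rule mod_mult_left_eq)
    also have "\<dots> = (i * (a * a')) mod p" by (simp add: ac_simps)
    also have "\<dots> = (i * ((a * a') mod p)) mod p" by (rule mod_mult_right_eq[symmetric])
    also have "\<dots> = i" using a' i by simp
    finally have ka: "(k * a) mod p = i" .
    have "(((i + a) mod p) * a') mod p = ((i + a) * a') mod p" by (rule mod_mult_left_eq)
    also have "\<dots> = (i * a' + a * a') mod p" by (simp add: algebra_simps)
    also have "\<dots> = ((i * a') mod p + (a * a') mod p) mod p" by (rule mod_add_eq[symmetric])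
    also have "\<dots> = (k + 1) mod p" using a' by (simp add: k_def)
    finally have kn: "(((i + a) mod p) * a') mod p = (k + 1) mod p" .
    have fi: "f i \<in> carrier H" using f i by auto
    have h0i: "h0 i = inv\<^bsub>H\<^esub> Q k" using i by (simp add: h0_def k_def)
    have h0n: "h0 ((i + a) mod p) = inv\<^bsub>H\<^esub> Q ((k + 1) mod p)" using p_gt kn by (simp add: h0_def)
    have QS: "Q (Suc k) = Q k \<otimes>\<^bsub>H\<^esub> f i" using ka by (simp add: Q_def)
    show ?thesis
    proof (cases "k + 1 < p")
      case True
      then have "h0 ((i + a) mod p) = inv\<^bsub>H\<^esub> f i \<otimes>\<^bsub>H\<^esub> inv\<^bsub>H\<^esub> Q k"
        using h0n QS by (simp add: H.inv_mult_group Qc fi)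
      then show ?thesis using h0i fi Qc by (simp add: H.cancel_r)
    next
      case False
      then have kp1: "k + 1 = p" using kp by simp
      then have "(k + 1) mod p = 0" by simp
      then have "h0 ((i + a) mod p) = \<one>\<^bsub>H\<^esub>" using h0n by (simp add: Q_def)
      moreover have "Q k \<otimes>\<^bsub>H\<^esub> f i = \<one>\<^bsub>H\<^esub>" using QS Qp kp1 by simp
      then have "inv\<^bsub>H\<^esub> Q k = f i" using fi Qc by (metis H.inv_comm H.inv_equality)
      ultimately show ?thesis using h0i fi by simp
    qed
  qed
  define c where "c = (h0, 0::nat)"
  have cc: "c \<in> carrier WG" using h0c p_gt by (simp add: c_def carrier_WG)
  have x0c: "x0 a \<in> carrier WG" using f by (simp add: x0_def carrier_WG)
  have comm: "(f, a) \<otimes>\<^bsub>WG\<^esub> c = c \<otimes>\<^bsub>WG\<^esub> x0 a"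
  proof -
    have "(f, a) \<otimes>\<^bsub>WG\<^esub> c = (\<lambda>i\<in>{0..<p}. f i \<otimes>\<^bsub>H\<^esub> h0 ((i + a) mod p), a)"
      using f(2) by (simp add: c_def mult_WG)
    also have "\<dots> = (\<lambda>i\<in>{0..<p}. h0 i, a)"
    proof (intro arg_cong2[where f=Pair] restrict_ext refl)
      fix i assume "i \<in> {0..<p}"
      then show "f i \<otimes>\<^bsub>H\<^esub> h0 ((i + a) mod p) = h0 i" using key[of i] by simp
    qed
    also have "\<dots> = c \<otimes>\<^bsub>WG\<^esub> x0 a"
      using f PiE_app2[OF h0c] by (simp add: c_def x0_def mult_WG) (intro restrict_ext, auto)
    finally show ?thesis .
  qed
  then have "(f, a) = c \<otimes>\<^bsub>WG\<^esub> x0 a \<otimes>\<^bsub>WG\<^esub> inv\<^bsub>WG\<^esub> c" using cc x0c x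
    by (metis W.m_assoc W.r_inv W.r_one W.inv_closed)
  then show ?thesis using a0 cc by auto
qed

lemma y0_form:
  assumes h: "h \<in> {0..<p} \<rightarrow>\<^sub>E carrier H" and a: "a < p"
  shows "conj_elt WG (x0 a) (h, 0) \<otimes>\<^bsub>WG\<^esub> x0 a
       = (\<lambda>i\<in>{0..<p}. inv\<^bsub>H\<^esub> h i \<otimes>\<^bsub>H\<^esub> h ((i + a) mod p), (a + a) mod p)"
proof -
  have hc: "(h, 0) \<in> carrier WG" using h p_gt by (simp add: carrier_WG)
  show ?thesis
    using a h PiE_app[OF h] PiE_app2[OF h]
    by (simp add: conj_elt_def inv_WG0[OF hc] x0_def mult_WG) (intro restrict_ext, simp)
qed

lemma idx_inj:
  assumes "k < p" "k' < p" "(b + k * c) mod p = (b + k' * c) mod p" "c mod p \<noteq> 0"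
  shows "k = k'"
proof -
  have *: "k = k'" if le: "k' \<le> k" and kp: "k < p" and e: "(b + k * c) mod p = (b + k' * c) mod p" for k k'
  proof -
    have "b + k' * c \<le> b + k * c" using le by (simp add: mult_le_mono1)
    then have "p dvd (b + k * c) - (b + k' * c)" using e mod_eq_dvd_iff_nat by blast
    moreover have "(b + k * c) - (b + k' * c) = (k - k') * c" by (simp add: diff_mult_distrib)
    ultimately have "p dvd (k - k') * c" by simp
    then have "p dvd (k - k') \<or> p dvd c" using prime prime_dvd_mult_iff by blast
    moreover have "\<not> p dvd c" using assms(4) by (simp add: dvd_eq_mod_eq_0)
    ultimately have "p dvd (k - k')" by simp
    moreover have "k - k' < p" using kp by simp
    ultimately have "k - k' = 0" using dvd_imp_le by (metis gr0I not_less)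
    then show ?thesis using le by simp
  qed
  show ?thesis
  proof (cases "k' \<le> k")
    case True then show ?thesis using * assms by blast
  next
    case False then show ?thesis using *[of k k'] assms by simp
  qed
qed

end

context wr2 begin
lemma main_G:
  assumes nc: "\<not> comm_group H" and x: "x \<in> carrier WG" and o: "W.ord x = p"
  shows "\<exists>w\<in>carrier WG. \<not> p_element WG p (conj_elt WG x w \<otimes>\<^bsub>WG\<^esub> x)"
proof -
  obtain f a where xfa: "x = (f, a)" by (cases x)
  from normal_form[OF x[unfolded xfa] o[unfolded xfa]] obtain c where a0: "0 < a"
    and cc: "c \<in> carrier WG" and xc: "x = c \<otimes>\<^bsub>WG\<^esub> x0 a \<otimes>\<^bsub>WG\<^esub> inv\<^bsub>WG\<^esub> c"
    using xfa by blast
  have ap: "a < p" using x xfa by (simp add: carrier_WG)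
  obtain u v where u: "u \<in> carrier H" and v: "v \<in> carrier H" and uv: "u \<otimes>\<^bsub>H\<^esub> v \<noteq> v \<otimes>\<^bsub>H\<^esub> u"
    using nc H.group_comm_groupI by blast
  define h where "h = (\<lambda>i\<in>{0..<p}. if i = 0 then u else if i = a then v else \<one>\<^bsub>H\<^esub>)"
  have hc: "h \<in> {0..<p} \<rightarrow>\<^sub>E carrier H" using u v by (auto simp: h_def)
  define d where "d = (h, 0::nat)"
  have dc: "d \<in> carrier WG" using hc p_gt by (simp add: d_def carrier_WG)
  have x0c: "x0 a \<in> carrier WG" using ap by (simp add: x0_def carrier_WG)
  define g where "g = (\<lambda>i\<in>{0..<p}. inv\<^bsub>H\<^esub> h i \<otimes>\<^bsub>H\<^esub> h ((i + a) mod p))"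
  define y where "y = conj_elt WG (x0 a) d \<otimes>\<^bsub>WG\<^esub> x0 a"
  have y: "y = (g, (a + a) mod p)" unfolding y_def g_def d_def by (rule y0_form[OF hc ap])
  have yc: "y \<in> carrier WG" unfolding y_def conj_elt_def using dc x0c by simp
  have ny: "\<not> p_element WG p y"
  proof (cases "p = 2")
    case True
    then have a1: "a = 1" using a0 ap by simp
    have "y = (g, 0)" using y True a1 by simp
    moreover have "g 0 \<noteq> \<one>\<^bsub>H\<^esub>"
    proof
      assume "g 0 = \<one>\<^bsub>H\<^esub>"
      then have "inv\<^bsub>H\<^esub> u \<otimes>\<^bsub>H\<^esub> v = \<one>\<^bsub>H\<^esub>" using True a1 by (simp add: g_def h_def)
      then have "u = v" using u v by (metis H.inv_equality H.inv_inv H.inv_closed)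
      then show False using uv by simp
    qed
    ultimately show ?thesis using not_p_element0 yc p_gt by blast
  next
    case False
    have nd2: "\<not> 2 dvd p"
    proof
      assume "2 dvd p"
      then have "(2::nat) = 1 \<or> 2 = p" using prime unfolding prime_nat_iff by blast
      then show False using False by simp
    qed
    have p3: "3 \<le> p" using False p_gt by simp
    define cc2 where "cc2 = (a + a) mod p"
    have c_nz: "cc2 mod p \<noteq> 0"
    proof
      assume "cc2 mod p = 0"
      then have "p dvd 2 * a" by (simp add: cc2_def dvd_eq_mod_eq_0 mult_2)
      then have "p dvd 2 \<or> p dvd a" using prime prime_dvd_mult_iff by blast
      then show False using p3 a0 ap by (auto dest: dvd_imp_le)
    qed
    have aa_ne_a: "(a + a) mod p \<noteq> a"
    proof
      assume "(a + a) mod p = a"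
      then have "(a + a) mod p = a mod p" using ap by simp
      then have "p dvd (a + a) - a" using mod_eq_dvd_iff_nat[of a "a + a" p] by simp
      then show False using a0 ap by (auto dest: dvd_imp_le)
    qed
    have pa_ne_a: "p - a \<noteq> a" using nd2 by presburger
    define G where "G = (\<lambda>i\<in>{0..<p}. lprod H (\<lambda>k. g ((i + k * cc2) mod p)) p)"
    have yp: "y [^]\<^bsub>WG\<^esub> p = (G, 0)"
      using yc y by (simp add: pow_WG G_def cc2_def)
    define s where "s = (\<lambda>k. g ((p - a + k * cc2) mod p))"
    have Gpa: "G (p - a) = lprod H s p" using ap a0 unfolding G_def s_def by simp
    have gc: "g j \<in> carrier H" if "j < p" for j using that hc by (auto simp: g_def PiE_app PiE_app2)
    have sc: "s k \<in> carrier H" for k using p_gt by (simp add: s_def gc)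
    define m where "m = (p + 1) div 2"
    have m2: "2 \<le> m" and mp: "m < p" and m2p: "2 * m = p + 1" using p3 nd2 by (auto simp: m_def)
    have i0: "(p - a + 0 * cc2) mod p = p - a" using a0 ap by simp
    have i1: "(p - a + 1 * cc2) mod p = a"
    proof -
      have "(p - a + 1 * cc2) mod p = (p - a + (a + a)) mod p" by (simp add: cc2_def mod_add_right_eq)
      also have "\<dots> = (p + a) mod p" using ap by simp
      finally show ?thesis using ap by simp
    qed
    have im: "(p - a + m * cc2) mod p = 0"
    proof -
      have "(p - a + m * cc2) mod p = (p - a + (m * ((a + a) mod p)) mod p) mod p"
        unfolding cc2_def by (rule mod_add_right_eq[symmetric])
      also have "\<dots> = (p - a + (m * (a + a)) mod p) mod p" by (simp only: mod_mult_right_eq)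
      also have "\<dots> = (p - a + m * (a + a)) mod p" by (rule mod_add_right_eq)
      also have "m * (a + a) = p * a + a"
      proof -
        have "m * (a + a) = (2 * m) * a" by (simp only: mult_2 add_mult_distrib2 add_mult_distrib)
        also have "\<dots> = p * a + a" using m2p by simp
        finally show ?thesis .
      qed
      also have "(p - a + (p * a + a)) mod p = (p * (a + 1)) mod p" using ap by (simp add: algebra_simps)
      finally show ?thesis by simp
    qed
    have hpa: "h (p - a) = \<one>\<^bsub>H\<^esub>" using a0 ap pa_ne_a by (simp add: h_def)
    have s0: "s 0 = u" using i0 a0 ap u hpa by (simp add: s_def g_def h_def)
    have s1: "s 1 = inv\<^bsub>H\<^esub> v"
    proof -
      have hx: "h ((a + a) mod p) = \<one>\<^bsub>H\<^esub>" using aa_ne_a c_nz p_gt by (simp add: h_def cc2_def)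
      have ha: "h a = v" using ap a0 by (simp add: h_def)
      have "s 1 = g a" using i1 by (simp add: s_def)
      also have "\<dots> = inv\<^bsub>H\<^esub> v \<otimes>\<^bsub>H\<^esub> h ((a + a) mod p)" using ap ha by (simp add: g_def)
      also have "\<dots> = inv\<^bsub>H\<^esub> v" using hx v by simp
      finally show ?thesis .
    qed
    have sm: "s m = inv\<^bsub>H\<^esub> u \<otimes>\<^bsub>H\<^esub> v" using im ap a0 p_gt by (simp add: s_def g_def h_def)
    have sother: "s k = \<one>\<^bsub>H\<^esub>" if k: "k < p" "k \<noteq> 0" "k \<noteq> 1" "k \<noteq> m" for k
    proof -
      define j where "j = (p - a + k * cc2) mod p"
      have jp: "j < p" using p_gt by (simp add: j_def)
      have "j \<noteq> p - a" using idx_inj[of k 0 "p - a" cc2] k c_nz p_gt i0 by (auto simp: j_def)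
      moreover have "j \<noteq> a" using idx_inj[of k 1 "p - a" cc2] k c_nz p_gt i1 by (auto simp: j_def)
      moreover have "j \<noteq> 0" using idx_inj[of k m "p - a" cc2] k c_nz mp im by (auto simp: j_def)
      ultimately have j1: "h j = \<one>\<^bsub>H\<^esub>" "(j + a) mod p \<noteq> 0" "(j + a) mod p \<noteq> a"
      proof -
        assume "j \<noteq> p - a" "j \<noteq> a" "j \<noteq> 0"
        then show "h j = \<one>\<^bsub>H\<^esub>" using jp by (simp add: h_def)
        show "(j + a) mod p \<noteq> 0"
        proof
          assume "(j + a) mod p = 0"
          then have "p dvd j + a" by (simp add: dvd_eq_mod_eq_0)
          then obtain t where t: "j + a = p * t" by (auto elim: dvdE)
          have "p * t < p * 2" using jp ap t by linarith
          then have "t < 2" using p_gt by simp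
          moreover have "t \<noteq> 0"
          proof
            assume "t = 0"
            with t have "j + a = 0" by simp
            with a0 show False by simp
          qed
          ultimately have "t = 1" by simp
          then show False using t \<open>j \<noteq> p - a\<close> by simp
        qed
        show "(j + a) mod p \<noteq> a"
        proof
          assume "(j + a) mod p = a"
          then have "(j + a) mod p = a mod p" using ap by simp
          then have "p dvd (j + a) - a" using mod_eq_dvd_iff_nat[of a "j + a" p] by simp
          then show False using \<open>j \<noteq> 0\<close> jp by (auto dest: dvd_imp_le)
        qed
      qed
      have "h ((j + a) mod p) = \<one>\<^bsub>H\<^esub>" using j1 p_gt by (simp add: h_def)
      then show ?thesis using j1 jp by (simp add: s_def g_def j_def[symmetric])
    qed
    have "lprod H s p = lprod H s (Suc m)"
    proof (rule H.lprod_skip)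
      show "Suc m \<le> p" using mp by simp
      show "s k = \<one>\<^bsub>H\<^esub>" if "Suc m \<le> k" "k < p" for k using that m2 by (intro sother) auto
      show "s k \<in> carrier H" if "k < p" for k using sc by simp
    qed
    also have "\<dots> = lprod H s m \<otimes>\<^bsub>H\<^esub> s m" by simp
    also have "lprod H s m = lprod H s 2"
    proof (rule H.lprod_skip)
      show "2 \<le> m" using m2 by simp
      show "s k = \<one>\<^bsub>H\<^esub>" if "2 \<le> k" "k < m" for k using that mp by (intro sother) auto
      show "s k \<in> carrier H" if "k < m" for k using sc by simp
    qed
    also have "lprod H s 2 = u \<otimes>\<^bsub>H\<^esub> inv\<^bsub>H\<^esub> v" using s0 s1 u v by (simp add: numeral_2_eq_2)
    finally have "G (p - a) = u \<otimes>\<^bsub>H\<^esub> inv\<^bsub>H\<^esub> v \<otimes>\<^bsub>H\<^esub> (inv\<^bsub>H\<^esub> u \<otimes>\<^bsub>H\<^esub> v)" using Gpa sm by simp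
    then have "G (p - a) \<noteq> \<one>\<^bsub>H\<^esub>" using H.comm_lemma[OF u v] uv by metis
    moreover have "p - a < p" using a0 ap by simp
    ultimately show ?thesis using not_p_element[OF yc yp] by blast
  qed
  define w where "w = c \<otimes>\<^bsub>WG\<^esub> d \<otimes>\<^bsub>WG\<^esub> inv\<^bsub>WG\<^esub> c"
  have wc: "w \<in> carrier WG" using cc dc by (simp add: w_def)
  have "conj_elt WG x w \<otimes>\<^bsub>WG\<^esub> x = c \<otimes>\<^bsub>WG\<^esub> y \<otimes>\<^bsub>WG\<^esub> inv\<^bsub>WG\<^esub> c"
    unfolding xc w_def y_def conj_elt_def using cc dc x0c
    by (simp add: W.inv_mult_group W.m_assoc W.cancel_l)
  then have "W.ord (conj_elt WG x w \<otimes>\<^bsub>WG\<^esub> x) = W.ord y" using W.conj_ord cc yc by simp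
  then have "\<not> p_element WG p (conj_elt WG x w \<otimes>\<^bsub>WG\<^esub> x)" using ny by (simp add: p_element_def)
  with wc show ?thesis by blast
qed

end

theorem lemma2p1:
  fixes H :: "('a, 'b) monoid_scheme" and W :: "('c, 'd) monoid_scheme" and p :: nat
  assumes "Factorial_Ring.prime p"
    and "group H" and "finite (carrier H)" and "\<not> comm_group H"
    and "\<not> p dvd order H"
    and "group W" and "W \<cong> wreath_cyc H p"
    and "x \<in> carrier W" and "group.ord W x = p"
  shows "\<exists>w \<in> carrier W. \<not> p_element W p (conj_elt W x w \<otimes>\<^bsub>W\<^esub> x)"
proof -
  interpret L: wr2 H p
    using assms prime_gt_1_nat[OF assms(1)] by (simp add: wr2_def wr_def wr_axioms_def wr2_axioms_def prime_gt_1_nat)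
  obtain \<phi> where \<phi>: "\<phi> \<in> iso W (wreath_cyc H p)" using assms(7) by (auto simp: is_iso_def)
  have hom: "\<phi> \<in> hom W (wreath_cyc H p)" and bij: "bij_betw \<phi> (carrier W) (carrier (wreath_cyc H p))"
    using \<phi> by (auto simp: iso_def)
  have inj: "inj_on \<phi> (carrier W)" using bij bij_betw_def by auto
  interpret gh: group_hom W "wreath_cyc H p" \<phi>
    using hom assms(6) L.group_WG by (simp add: group_hom_def group_hom_axioms_def)
  have ox: "group.ord (wreath_cyc H p) (\<phi> x) = p"
    using iso_ord[OF assms(6) L.group_WG hom inj assms(8)] assms(9) by simp
  obtain w' where w': "w' \<in> carrier (wreath_cyc H p)"
    "\<not> p_element (wreath_cyc H p) p (conj_elt (wreath_cyc H p) (\<phi> x) w' \<otimes>\<^bsub>wreath_cyc H p\<^esub> \<phi> x)"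
    using L.main_G[OF assms(4) _ ox] assms(8) by auto
  obtain w where w: "w \<in> carrier W" "\<phi> w = w'" using bij w' by (metis bij_betw_imp_surj_on imageE)
  have "\<phi> (conj_elt W x w \<otimes>\<^bsub>W\<^esub> x) = conj_elt (wreath_cyc H p) (\<phi> x) w' \<otimes>\<^bsub>wreath_cyc H p\<^esub> \<phi> x"
    using w assms(8) by (simp add: conj_elt_def)
  moreover have "conj_elt W x w \<otimes>\<^bsub>W\<^esub> x \<in> carrier W"
    using w assms(8) by (simp add: conj_elt_def)
  ultimately have "group.ord (wreath_cyc H p) (conj_elt (wreath_cyc H p) (\<phi> x) w' \<otimes>\<^bsub>wreath_cyc H p\<^esub> \<phi> x)
      = group.ord W (conj_elt W x w \<otimes>\<^bsub>W\<^esub> x)"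
    using iso_ord[OF assms(6) L.group_WG hom inj] by metis
  then show ?thesis using w w' by (auto simp: p_element_def)
qed

end
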